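(* Let $F$ be a finite field with $q=|F|$. Let $r,m,n\in\mathbb{N}$ satisfy $m\le n$. Then the number of $(m+n+1)$-tuples $x\in F^{m+n+1}$ satisfying $\operatorname{rank}(H_{m,n}(x))=r$ equals $1$ if $r=0$; $q^{2r-2}(q^2-1)$ if $0<r\le m$; $q^{2r-2}(q^{n-m+1}-1)$ if $r=m+1$; and $0$ if $r>m+1$.
   Context: $\mathbb{N}=\{0,1,2,\ldots\}$. For $N\in\mathbb{N}$, $x=(x_0,\ldots,x_N)\in F^{N+1}$ and integers $p,p'\ge -1$ with $p+p'\le N$, the Hankel matrix $H_{p,p'}(x)$ is the $(p+1)\times(p'+1)$ matrix $(x_{i+j})_{0\le i\le p,\,0\le j\le p'}$. *)

theory Defs
  imports "Jordan_Normal_Form.DL_Rank"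
begin

definition hankel :: "nat \<Rightarrow> nat \<Rightarrow> 'a list \<Rightarrow> 'a mat" where
  "hankel p p' x = mat (p + 1) (p' + 1) (\<lambda>(i, j). x ! (i + j))"

definition mrank :: "'a::field mat \<Rightarrow> nat" where
  "mrank A = vec_space.rank (dim_row A) A"

end

theory Submission
  imports Defs "HOL-Computational_Algebra.Formal_Power_Series"
begin

context vec_space
begin

lemma card_span_indpt:
  assumes fin: "finite S" and SC: "S \<subseteq> carrier_vec n" and li: "lin_indpt S"
  shows "card (span S) = card (UNIV::'a set) ^ card S"
proof -
  let ?f = "\<lambda>a. lincomb a S"
  have sp: "span S = {lincomb a S |a. a \<in> S \<rightarrow> carrier class_ring}"
    using finite_span[OF fin] SC by simp
  have "span S = ?f ` (S \<rightarrow>\<^sub>E UNIV)"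
  proof
    show "span S \<subseteq> ?f ` (S \<rightarrow>\<^sub>E UNIV)"
    proof
      fix v assume "v \<in> span S"
      then obtain a where a: "lincomb a S = v" using sp by auto
      have "lincomb (restrict a S) S = lincomb a S"
        by (rule lincomb_cong) (use SC in auto)
      moreover have "restrict a S \<in> S \<rightarrow>\<^sub>E UNIV" by auto
      ultimately show "v \<in> ?f ` (S \<rightarrow>\<^sub>E UNIV)" using a by (intro image_eqI[where x="restrict a S"]) auto
    qed
    show "?f ` (S \<rightarrow>\<^sub>E UNIV) \<subseteq> span S" using sp by auto
  qed
  moreover have "inj_on ?f (S \<rightarrow>\<^sub>E UNIV)"
  proof
    fix a b assume a: "a \<in> S \<rightarrow>\<^sub>E UNIV" and b: "b \<in> S \<rightarrow>\<^sub>E UNIV" and eq: "lincomb a S = lincomb b S"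
    have lc: "lincomb a S \<in> carrier_vec n" using lincomb_closed[OF SC] by auto
    have "lincomb (\<lambda>v. a v - b v) S = lincomb a S \<ominus>\<^bsub>V\<^esub> lincomb b S"
      by (rule lincomb_diff[OF fin SC])
    also have "\<dots> = \<zero>\<^bsub>V\<^esub>" using eq lc
      using M.r_neg[of "lincomb b S"] by (simp add: a_minus_def)
    finally have z: "lincomb (\<lambda>v. a v - b v) S = \<zero>\<^bsub>V\<^esub>" .
    have "\<forall>v\<in>S. a v - b v = 0"
    proof (rule ccontr)
      assume "\<not> (\<forall>v\<in>S. a v - b v = 0)"
      then obtain v where "v \<in> S" "a v - b v \<noteq> 0" by auto
      then have "lin_dep S"
        using z fin by (intro lin_dep_crit[where A=S and S=S and a="\<lambda>v. a v - b v" and v=v]) auto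
      then show False using li by simp
    qed
    then show "a = b" using a b by (auto simp: PiE_def extensional_def fun_eq_iff)
  qed
  ultimately have "card (span S) = card (S \<rightarrow>\<^sub>E (UNIV::'a set))" by (simp add: card_image)
  also have "\<dots> = card (UNIV::'a set) ^ card S" by (simp add: card_PiE fin)
  finally show ?thesis .
qed

lemma card_col_image:
  assumes A: "A \<in> carrier_mat n nc"
  shows "card {A *\<^sub>v v | v. v \<in> carrier_vec nc} = card (UNIV::'a set) ^ rank A"
proof -
  have li0: "lin_indpt {}" by (simp add: lin_dep_def)
  obtain S where fS: "finite S" and max: "maximal S (\<lambda>T. T \<subseteq> set (cols A) \<and> lin_indpt T)"
    using maximal_exists_superset[of "set (cols A)" "\<lambda>T. T \<subseteq> set (cols A) \<and> lin_indpt T" "{}"] li0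
    by auto
  have rk: "rank A = card S" by (rule rank_card_indpt[OF A max])
  have colsC: "set (cols A) \<subseteq> carrier_vec n" using A cols_dim by blast
  have SS: "S \<subseteq> set (cols A)" and liS: "lin_indpt S" using max unfolding maximal_def by auto
  have SC: "S \<subseteq> carrier_vec n" using SS colsC by auto
  have "set (cols A) \<subseteq> span S"
  proof
    fix c assume c: "c \<in> set (cols A)"
    show "c \<in> span S"
    proof (cases "c \<in> S")
      case True then show ?thesis using in_own_span[OF SC] by auto
    next
      case False
      have "\<not> lin_indpt (S \<union> {c})"
      proof
        assume "lin_indpt (S \<union> {c})"
        then have "S \<union> {c} = S" using max c SS unfolding maximal_def by auto
        then show False using False by auto
      qed
      then show ?thesis using lin_dep_iff_in_span[OF SC liS _ False] c colsC by auto
    qed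
  qed
  then have "span (set (cols A)) \<subseteq> span S"
    by (intro span_is_subset span_is_submodule SC)
  moreover have "span S \<subseteq> span (set (cols A))" by (rule span_is_monotone[OF SS])
  ultimately have sp: "span (set (cols A)) = span S" by auto
  have "{A *\<^sub>v v | v. v \<in> carrier_vec nc} = col_space A"
    unfolding col_space_eq[OF A] using A by auto
  also have "\<dots> = span S" unfolding col_space_def sp ..
  finally show ?thesis using card_span_indpt[OF fS SC liS] rk by simp
qed

end


definition VV :: "nat \<Rightarrow> (nat \<Rightarrow> 'a::zero) set" where "VV d = {v. \<forall>j\<ge>d. v j = 0}"

definition app :: "(nat \<Rightarrow> nat \<Rightarrow> 'a::comm_ring_1) \<Rightarrow> nat \<Rightarrow> nat \<Rightarrow> (nat \<Rightarrow> 'a) \<Rightarrow> nat \<Rightarrow> 'a" where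
  "app M a b v = (\<lambda>i. if i < a then (\<Sum>j<b. M i j * v j) else 0)"

definition Img :: "(nat \<Rightarrow> nat \<Rightarrow> 'a::comm_ring_1) \<Rightarrow> nat \<Rightarrow> nat \<Rightarrow> (nat \<Rightarrow> 'a) set" where
  "Img M a b = app M a b ` VV b"

definition mmul :: "(nat \<Rightarrow> nat \<Rightarrow> 'a::comm_ring_1) \<Rightarrow> (nat \<Rightarrow> nat \<Rightarrow> 'a) \<Rightarrow> nat \<Rightarrow> nat \<Rightarrow> nat \<Rightarrow> 'a" where
  "mmul M N c = (\<lambda>i j. \<Sum>l<c. M i l * N l j)"

lemma VV_eq: "VV d = (\<lambda>f j. if j < d then f j else 0) ` ({..<d} \<rightarrow>\<^sub>E UNIV)"
proof
  show "VV d \<subseteq> (\<lambda>f j. if j < d then f j else 0) ` ({..<d} \<rightarrow>\<^sub>E UNIV)"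
  proof
    fix v assume v: "v \<in> VV d"
    have "v = (\<lambda>j. if j < d then restrict v {..<d} j else 0)"
      using v by (auto simp: VV_def fun_eq_iff)
    moreover have "restrict v {..<d} \<in> {..<d} \<rightarrow>\<^sub>E UNIV" by auto
    ultimately show "v \<in> (\<lambda>f j. if j < d then f j else 0) ` ({..<d} \<rightarrow>\<^sub>E UNIV)" by (rule image_eqI)
  qed
  show "(\<lambda>f j. if j < d then f j else 0) ` ({..<d} \<rightarrow>\<^sub>E UNIV) \<subseteq> VV d"
    unfolding VV_def by (rule image_subsetI) simp
qed

lemma card_VV: "card (VV d :: (nat \<Rightarrow> 'a::{finite,zero}) set) = card (UNIV::'a set) ^ d"
proof -
  have inj: "inj_on (\<lambda>f j. if j < d then f j else (0::'a)) ({..<d} \<rightarrow>\<^sub>E UNIV)"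
  proof
    fix f g :: "nat \<Rightarrow> 'a" assume f: "f \<in> {..<d} \<rightarrow>\<^sub>E UNIV" and g: "g \<in> {..<d} \<rightarrow>\<^sub>E UNIV"
      and eq: "(\<lambda>j. if j < d then f j else 0) = (\<lambda>j. if j < d then g j else 0)"
    show "f = g"
    proof
      fix j show "f j = g j"
        using f g fun_cong[OF eq, of j] by (cases "j < d") (auto simp: PiE_def extensional_def)
    qed
  qed
  have "card (VV d :: (nat \<Rightarrow> 'a) set) = card ({..<d} \<rightarrow>\<^sub>E (UNIV::'a set))"
    unfolding VV_eq by (rule card_image[OF inj])
  also have "\<dots> = card (UNIV::'a set) ^ d" by (simp add: card_PiE)
  finally show ?thesis .
qed

lemma finite_VV: "finite (VV d :: (nat \<Rightarrow> 'a::{finite,zero}) set)"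
  unfolding VV_eq by (intro finite_imageI finite_PiE) auto

lemma app_in_VV: "app M a b v \<in> VV a"
  by (auto simp: app_def VV_def)

lemma Img_sub: "Img M a b \<subseteq> VV a"
  by (auto simp: Img_def app_in_VV)

lemma finite_Img: "finite (Img M a (b::nat) :: (nat \<Rightarrow> 'a::{finite,comm_ring_1}) set)"
  using finite_subset[OF Img_sub finite_VV] .

lemma app_cong:
  assumes "\<And>i j. i < a \<Longrightarrow> j < b \<Longrightarrow> M i j = M' i j" "\<And>j. j < b \<Longrightarrow> v j = v' j"
  shows "app M a b v = app M' a b v'"
  unfolding app_def using assms by (auto intro!: sum.cong)

lemma Img_cong:
  assumes "\<And>i j. i < a \<Longrightarrow> j < b \<Longrightarrow> M i j = M' i j"
  shows "Img M a b = Img M' a b"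
  unfolding Img_def using app_cong[OF assms] by (intro image_cong) auto

lemma app_mmul: "app (mmul M N c) a b v = app M a c (app N c b v)"
proof
  fix i show "app (mmul M N c) a b v i = app M a c (app N c b v) i"
  proof (cases "i < a")
    case True
    have "(\<Sum>j<b. (\<Sum>l<c. M i l * N l j) * v j) = (\<Sum>l<c. M i l * (\<Sum>j<b. N l j * v j))"
      by (simp add: sum_distrib_left sum_distrib_right mult.assoc sum.swap[of _ "{..<b}"])
    also have "\<dots> = (\<Sum>l<c. M i l * app N c b v l)"
      by (intro sum.cong) (auto simp: app_def)
    finally show ?thesis using True by (simp add: app_def mmul_def)
  qed (simp add: app_def)
qed

lemma Img_mmul_surj:
  assumes "app N c b ` VV b = VV c"
  shows "Img (mmul M N c) a b = Img M a c"
proof -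
  have "Img (mmul M N c) a b = app M a c ` (app N c b ` VV b)"
    unfolding Img_def app_mmul by (simp add: image_image)
  then show ?thesis using assms by (simp add: Img_def)
qed

lemma app_diff: "app M a b (\<lambda>j. v j - w j) = (\<lambda>i. app M a b v i - app M a b w i)"
  by (auto simp: app_def fun_eq_iff right_diff_distrib sum_subtractf)

lemma inj_from_kernel:
  assumes "\<And>v. v \<in> VV b \<Longrightarrow> app M a b v = (\<lambda>_. 0) \<Longrightarrow> v = (\<lambda>_. 0)"
  shows "inj_on (app M a b) (VV b)"
proof
  fix v w assume v: "v \<in> VV b" and w: "w \<in> VV b" and eq: "app M a b v = app M a b w"
  have "(\<lambda>j. v j - w j) \<in> VV b" using v w by (auto simp: VV_def)
  moreover have "app M a b (\<lambda>j. v j - w j) = (\<lambda>_. 0)" unfolding app_diff eq by simp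
  ultimately have "(\<lambda>j. v j - w j) = (\<lambda>_. 0)" using assms by blast
  then show "v = w" by (auto simp: fun_eq_iff dest: fun_cong)
qed

lemma surj_square:
  fixes M :: "nat \<Rightarrow> nat \<Rightarrow> 'a::{finite,comm_ring_1}"
  assumes "inj_on (app M d d) (VV d)"
  shows "app M d d ` VV d = VV d"
proof -
  have "app M d d ` VV d \<subseteq> VV d" using app_in_VV by auto
  moreover have "card (app M d d ` VV d) = card (VV d :: (nat \<Rightarrow> 'a) set)"
    using card_image[OF assms] .
  ultimately show ?thesis using finite_VV by (intro card_subset_eq) auto
qed

lemma tri_kernel:
  fixes M :: "nat \<Rightarrow> nat \<Rightarrow> 'a::field" and p c :: "nat \<Rightarrow> nat"
  assumes piv: "\<And>i. i < d \<Longrightarrow> M i (p i) \<noteq> 0"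
    and onto: "\<And>j. j < d \<Longrightarrow> \<exists>i<d. p i = j"
    and shape: "\<And>i j. i < d \<Longrightarrow> j < d \<Longrightarrow> M i j \<noteq> 0 \<Longrightarrow> j \<noteq> p i \<Longrightarrow> c (p i) < c j"
    and cinj: "inj_on c {..<d}"
    and v: "v \<in> VV d" and ker: "app M d d v = (\<lambda>_. 0)"
  shows "v = (\<lambda>_. 0)"
proof (rule ccontr)
  assume "v \<noteq> (\<lambda>_. 0)"
  then obtain j1 where "v j1 \<noteq> 0" by auto
  then have j1: "j1 < d" using v by (auto simp: VV_def) (meson not_le)
  let ?J = "{j. j < d \<and> v j \<noteq> 0}"
  have finJ: "finite ?J" by auto
  have neJ: "?J \<noteq> {}" using j1 \<open>v j1 \<noteq> 0\<close> by auto
  have "Max (c ` ?J) \<in> c ` ?J" using finJ neJ by (intro Max_in) auto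
  then obtain j0 where j0: "j0 \<in> ?J" and j0c: "c j0 = Max (c ` ?J)" by auto
  have j0max: "c j \<le> c j0" if "j \<in> ?J" for j
    unfolding j0c using finJ that by (intro Max_ge) auto
  obtain i where i: "i < d" "p i = j0" using onto j0 by auto
  have "app M d d v i = 0" using ker by simp
  then have row: "(\<Sum>j<d. M i j * v j) = 0" using i by (simp add: app_def)
  have "(\<Sum>j<d. M i j * v j) = M i j0 * v j0 + (\<Sum>j\<in>{..<d} - {j0}. M i j * v j)"
    using j0 by (subst sum.remove[of _ j0]) auto
  also have "(\<Sum>j\<in>{..<d} - {j0}. M i j * v j) = 0"
  proof (rule sum.neutral, rule ballI)
    fix j assume jj: "j \<in> {..<d} - {j0}"
    show "M i j * v j = 0"
    proof (rule ccontr)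
      assume "M i j * v j \<noteq> 0"
      then have "M i j \<noteq> 0" "v j \<noteq> 0" by auto
      then have "c j \<le> c j0" using j0max jj by auto
      moreover have "c j \<noteq> c j0" using cinj jj j0 by (auto dest: inj_onD)
      moreover have "c j0 < c j" using shape[OF i(1) _ \<open>M i j \<noteq> 0\<close>] jj i by auto
      ultimately show False by auto
    qed
  qed
  finally have "M i j0 * v j0 = 0" using row by simp
  then show False using piv[OF i(1)] i j0 by auto
qed


lemma sum_lessThan_add: "(\<Sum>j<k+(b::nat). f j) = (\<Sum>j<k. f j) + (\<Sum>j<b. f (j+k))"
  by (induction b) (auto simp: add_ac)

lemma mrank_card:
  fixes M :: "nat \<Rightarrow> nat \<Rightarrow> 'a::{finite,field}"
  shows "card (Img M a b) = card (UNIV::'a set) ^ mrank (mat a b (\<lambda>(i,j). M i j))"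
proof -
  let ?A = "mat a b (\<lambda>(i,j). M i j)"
  have A: "?A \<in> carrier_mat a b" by simp
  let ?S = "{?A *\<^sub>v v | v. v \<in> carrier_vec b}"
  let ?\<phi> = "\<lambda>w::'a vec. (\<lambda>i. if i < a then w $ i else 0)"
  have inj: "inj_on ?\<phi> ?S"
  proof
    fix w1 w2 assume "w1 \<in> ?S" "w2 \<in> ?S" and eq: "?\<phi> w1 = ?\<phi> w2"
    then have d: "dim_vec w1 = a" "dim_vec w2 = a" by auto
    show "w1 = w2"
    proof (rule eq_vecI)
      fix i assume "i < dim_vec w2" then show "w1 $ i = w2 $ i" using fun_cong[OF eq, of i] d by auto
    qed (use d in auto)
  qed
  have key: "?\<phi> (?A *\<^sub>v v) = app M a b (\<lambda>j. if j < b then v $ j else 0)" if "v \<in> carrier_vec b" for v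
    using that by (auto simp: app_def fun_eq_iff scalar_prod_def atLeast0LessThan intro!: sum.cong)
  have img: "?\<phi> ` ?S = Img M a b"
  proof
    show "?\<phi> ` ?S \<subseteq> Img M a b"
    proof
      fix y assume "y \<in> ?\<phi> ` ?S"
      then obtain v where v: "v \<in> carrier_vec b" "y = ?\<phi> (?A *\<^sub>v v)" by auto
      moreover have "(\<lambda>j. if j < b then v $ j else 0) \<in> VV b" by (auto simp: VV_def)
      ultimately show "y \<in> Img M a b" unfolding Img_def using key by auto
    qed
    show "Img M a b \<subseteq> ?\<phi> ` ?S"
    proof
      fix y assume "y \<in> Img M a b"
      then obtain u where u: "u \<in> VV b" "y = app M a b u" by (auto simp: Img_def)
      have "(\<lambda>j. if j < b then vec b u $ j else 0) = u" using u(1) by (auto simp: VV_def fun_eq_iff)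
      then have "y = ?\<phi> (?A *\<^sub>v vec b u)" using key[of "vec b u"] u by simp
      moreover have "?A *\<^sub>v vec b u \<in> ?S" by auto
      ultimately show "y \<in> ?\<phi> ` ?S" by blast
    qed
  qed
  have "card (Img M a b) = card ?S" using card_image[OF inj] img by simp
  also have "\<dots> = card (UNIV::'a set) ^ vec_space.rank a ?A"
    by (rule vec_space.card_col_image[OF A])
  finally show ?thesis by (simp add: mrank_def)
qed

lemma card_Img_block:
  fixes T D :: "nat \<Rightarrow> nat \<Rightarrow> 'a::{finite,field}"
  assumes injT: "inj_on (app T k k) (VV k)"
  shows "card (Img (\<lambda>i j. if i < k \<and> j < k then T i j else if k \<le> i \<and> k \<le> j then D (i-k) (j-k) else 0) (k+a) (k+b))
     = card (UNIV::'a set) ^ k * card (Img D a b)"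
proof -
  let ?G = "\<lambda>i j. if i < k \<and> j < k then T i j else if k \<le> i \<and> k \<le> j then D (i-k) (j-k) else 0"
  let ?comb = "\<lambda>(w1::nat\<Rightarrow>'a, w2::nat\<Rightarrow>'a). (\<lambda>i. if i < k then w1 i else w2 (i-k))"
  have surjT: "app T k k ` VV k = VV k" by (rule surj_square[OF injT])
  have appG: "app ?G (k+a) (k+b) v = ?comb (app T k k (\<lambda>j. if j < k then v j else 0), app D a b (\<lambda>j. v (j+k)))" for v
  proof
    fix i
    show "app ?G (k+a) (k+b) v i = ?comb (app T k k (\<lambda>j. if j < k then v j else 0), app D a b (\<lambda>j. v (j+k))) i"
    proof (cases "i < k")
      case True
      then show ?thesis by (simp add: app_def sum_lessThan_add)
    next
      case False
      then show ?thesis by (auto simp: app_def sum_lessThan_add)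
    qed
  qed
  have "Img ?G (k+a) (k+b) = ?comb ` (VV k \<times> Img D a b)"
  proof
    show "Img ?G (k+a) (k+b) \<subseteq> ?comb ` (VV k \<times> Img D a b)"
    proof
      fix y assume "y \<in> Img ?G (k+a) (k+b)"
      then obtain v where v: "v \<in> VV (k+b)" "y = app ?G (k+a) (k+b) v" by (auto simp: Img_def)
      have "(\<lambda>j. v (j+k)) \<in> VV b" using v(1) by (auto simp: VV_def)
      then show "y \<in> ?comb ` (VV k \<times> Img D a b)" unfolding v(2) appG
        by (intro image_eqI[OF refl]) (auto simp: Img_def app_in_VV)
    qed
    show "?comb ` (VV k \<times> Img D a b) \<subseteq> Img ?G (k+a) (k+b)"
    proof
      fix y assume "y \<in> ?comb ` (VV k \<times> Img D a b)"
      then obtain w1 w2 where w: "w1 \<in> VV k" "w2 \<in> Img D a b" "y = ?comb (w1, w2)" by auto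
      obtain v1 where v1: "v1 \<in> VV k" "w1 = app T k k v1" using w(1) surjT by blast
      obtain v2 where v2: "v2 \<in> VV b" "w2 = app D a b v2" using w(2) by (auto simp: Img_def)
      let ?v = "\<lambda>j. if j < k then v1 j else v2 (j-k)"
      have vV: "?v \<in> VV (k+b)" using v2(1) by (auto simp: VV_def)
      have e1: "(\<lambda>j. if j < k then ?v j else 0) = v1" using v1(1) by (auto simp: VV_def fun_eq_iff)
      have e2: "(\<lambda>j. ?v (j+k)) = v2" by auto
      have "y = app ?G (k+a) (k+b) ?v" unfolding appG e1 e2 w(3) v1(2) v2(2) ..
      then show "y \<in> Img ?G (k+a) (k+b)" using vV by (auto simp: Img_def)
    qed
  qed
  moreover have "inj_on ?comb (VV k \<times> Img D a b)"
  proof (rule inj_onI, clarify)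
    fix w1 w2 w1' w2' assume "w1 \<in> VV k" "w1' \<in> VV k"
      and eq: "(\<lambda>i. if i < k then w1 i else w2 (i-k)) = (\<lambda>i. if i < k then w1' i else w2' (i-k))"
    have "w1 = w1'"
    proof
      fix i show "w1 i = w1' i" using fun_cong[OF eq, of i] \<open>w1 \<in> VV k\<close> \<open>w1' \<in> VV k\<close>
        by (cases "i < k") (auto simp: VV_def)
    qed
    moreover have "w2 = w2'"
    proof
      fix i show "w2 i = w2' i" using fun_cong[OF eq, of "i+k"] by simp
    qed
    ultimately show "w1 = w1' \<and> w2 = w2'" by simp
  qed
  ultimately have "card (Img ?G (k+a) (k+b)) = card (VV k \<times> Img D a b :: ((nat\<Rightarrow>'a) \<times> (nat\<Rightarrow>'a)) set)" by (simp add: card_image)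
  also have "\<dots> = card (UNIV::'a set) ^ k * card (Img D a b)"
    by (simp add: card_cartesian_product card_VV)
  finally show ?thesis .
qed


lemma sum_reduce_atMost:
  assumes "a < (A::nat)" "\<And>i. a < i \<Longrightarrow> f i = 0"
  shows "(\<Sum>i<A. f i) = (\<Sum>i=0..a. f i)"
  using assms by (intro sum.mono_neutral_right) auto

lemma sum_split_atMost: "(\<Sum>j=0..p+(n::nat). f j) = (\<Sum>j<p. f j) + (\<Sum>e=0..n. f (p+e))"
proof (induction n)
  case 0 then show ?case by (simp add: atLeast0AtMost lessThan_Suc_atMost[symmetric])
next
  case (Suc n) then show ?case by (simp add: add_ac)
qed

definition sfps :: "(nat \<Rightarrow> 'a::field) \<Rightarrow> nat \<Rightarrow> 'a fps" where
  "sfps X k = Abs_fps (\<lambda>e. X (k+e))"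

definition uu :: "(nat \<Rightarrow> 'a::field) \<Rightarrow> nat \<Rightarrow> nat \<Rightarrow> 'a" where
  "uu X k l = fps_nth (inverse (sfps X k)) l"

definition Pm :: "(nat \<Rightarrow> 'a::field) \<Rightarrow> nat \<Rightarrow> nat \<Rightarrow> nat \<Rightarrow> 'a" where
  "Pm X k a i = (if a \<le> k then (if i = a then 1 else 0) else if i \<le> a then uu X k (a-i) else 0)"

context
  fixes X :: "nat \<Rightarrow> 'a::field" and k :: nat
  assumes z: "\<And>e. e < k \<Longrightarrow> X e = 0" and nz: "X k \<noteq> 0"
begin

lemma s_inv: "sfps X k * inverse (sfps X k) = 1"
  by (rule inverse_mult_eq_1') (simp add: sfps_def nz)

lemma conv: "(\<Sum>e=0..n. X (k+e) * uu X k (n-e)) = (if n = 0 then 1 else 0)"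
proof -
  have "fps_nth (sfps X k * inverse (sfps X k)) n = fps_nth (1::'a fps) n" by (simp add: s_inv)
  then show ?thesis by (simp add: fps_mult_nth sfps_def uu_def)
qed

lemma uu0: "uu X k 0 \<noteq> 0"
  using nz by (simp add: uu_def sfps_def)

lemma C1:
  assumes "i \<le> k"
  shows "(\<Sum>j=0..b. X (i+j) * uu X k (b-j)) = (if i + b = k then 1 else 0)"
proof (cases "b < k - i")
  case True
  then have "(\<Sum>j=0..b. X (i+j) * uu X k (b-j)) = 0"
    by (intro sum.neutral) (auto simp: z)
  then show ?thesis using True by auto
next
  case False
  then obtain n where b: "b = (k - i) + n" using le_Suc_ex by (metis not_less)
  have "(\<Sum>j=0..b. X (i+j) * uu X k (b-j)) =
    (\<Sum>j<k-i. X (i+j) * uu X k (b-j)) + (\<Sum>e=0..n. X (i+((k-i)+e)) * uu X k (b-((k-i)+e)))"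
    unfolding b by (rule sum_split_atMost)
  also have "(\<Sum>j<k-i. X (i+j) * uu X k (b-j)) = 0" by (intro sum.neutral) (auto simp: z)
  also have "(\<Sum>e=0..n. X (i+((k-i)+e)) * uu X k (b-((k-i)+e))) = (\<Sum>e=0..n. X (k+e) * uu X k (n-e))"
    using assms b by (intro sum.cong) auto
  also have "\<dots> = (if n = 0 then 1 else 0)" by (rule conv)
  finally show ?thesis using assms b by auto
qed

lemma C2:
  assumes "k < i"
  shows "(\<Sum>j=0..b. X (i+j) * uu X k (b-j)) = - (\<Sum>e<i-k. X (k+e) * uu X k (i-k+b-e))"
proof -
  have "(\<Sum>e=0..(i-k)+b. X (k+e) * uu X k ((i-k)+b-e)) =
    (\<Sum>e<i-k. X (k+e) * uu X k ((i-k)+b-e)) + (\<Sum>j=0..b. X (k+((i-k)+j)) * uu X k ((i-k)+b-((i-k)+j)))"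
    by (rule sum_split_atMost)
  moreover have "(\<Sum>e=0..(i-k)+b. X (k+e) * uu X k ((i-k)+b-e)) = (if (i-k)+b = 0 then 1 else 0)"
    by (rule conv)
  moreover have "(\<Sum>j=0..b. X (k+((i-k)+j)) * uu X k ((i-k)+b-((i-k)+j))) = (\<Sum>j=0..b. X (i+j) * uu X k (b-j))"
    using assms by (intro sum.cong) auto
  ultimately show ?thesis using assms by (simp add: eq_neg_iff_add_eq_0 add.commute)
qed

lemma inner:
  assumes "b < B"
  shows "(\<Sum>j<B. X (i+j) * Pm X k b j) = (if b \<le> k then X (i+b) else (\<Sum>j=0..b. X (i+j) * uu X k (b-j)))"
proof (cases "b \<le> k")
  case True
  then have "(\<Sum>j<B. X (i+j) * Pm X k b j) = (\<Sum>j<B. if j = b then X (i+j) else 0)"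
    by (intro sum.cong) (auto simp: Pm_def)
  then show ?thesis using True assms by simp
next
  case False
  have "(\<Sum>j<B. X (i+j) * Pm X k b j) = (\<Sum>j=0..b. X (i+j) * Pm X k b j)"
    using assms by (intro sum_reduce_atMost) (auto simp: Pm_def)
  also have "\<dots> = (\<Sum>j=0..b. X (i+j) * uu X k (b-j))"
    using False by (intro sum.cong) (auto simp: Pm_def)
  finally show ?thesis using False by simp
qed

lemma outer:
  assumes "a < A"
  shows "(\<Sum>i<A. Pm X k a i * R i) = (if a \<le> k then R a else (\<Sum>i=0..a. uu X k (a-i) * R i))"
proof (cases "a \<le> k")
  case True
  then have "(\<Sum>i<A. Pm X k a i * R i) = (\<Sum>i<A. if i = a then R i else 0)"
    by (intro sum.cong) (auto simp: Pm_def)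
  then show ?thesis using True assms by simp
next
  case False
  have "(\<Sum>i<A. Pm X k a i * R i) = (\<Sum>i=0..a. Pm X k a i * R i)"
    using assms by (intro sum_reduce_atMost) (auto simp: Pm_def)
  also have "\<dots> = (\<Sum>i=0..a. uu X k (a-i) * R i)"
    using False by (intro sum.cong) (auto simp: Pm_def)
  finally show ?thesis using False by simp
qed

lemma entry_hh:
  assumes "k < a" "k < b"
  shows "(\<Sum>i=0..a. uu X k (a-i) * (\<Sum>j=0..b. X (i+j) * uu X k (b-j))) = - uu X k (a+b-k)"
proof -
  obtain M where a: "a = (k+1) + M" using assms(1) by (metis less_iff_Suc_add add_Suc_right add.commute Suc_eq_plus1 add_Suc)
  define sh where "sh = Abs_fps (\<lambda>g. uu X k (b+1+g))"
  let ?I = "\<lambda>i. (\<Sum>j=0..b. X (i+j) * uu X k (b-j))"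
  have "(\<Sum>i=0..a. uu X k (a-i) * ?I i) = (\<Sum>i<k+1. uu X k (a-i) * ?I i) + (\<Sum>t=0..M. uu X k (a-(k+1+t)) * ?I (k+1+t))"
    unfolding a by (rule sum_split_atMost)
  also have "(\<Sum>i<k+1. uu X k (a-i) * ?I i) = 0"
    using assms by (intro sum.neutral) (auto simp: C1)
  also have "(\<Sum>t=0..M. uu X k (a-(k+1+t)) * ?I (k+1+t)) = (\<Sum>t=0..M. - (fps_nth (sfps X k * sh) t * uu X k (M-t)))"
  proof (rule sum.cong[OF refl])
    fix t assume t: "t \<in> {0..M}"
    have "?I (k+1+t) = - (\<Sum>e<t+1. X (k+e) * uu X k (t+1+b-e))"
      using C2[of "k+1+t" b] by simp
    also have "(\<Sum>e<t+1. X (k+e) * uu X k (t+1+b-e)) = (\<Sum>e=0..t. X (k+e) * uu X k (t+1+b-e))"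
      by (simp add: atLeast0AtMost lessThan_Suc_atMost)
    also have "\<dots> = (\<Sum>e=0..t. X (k+e) * uu X k (b+1+(t-e)))"
    proof (rule sum.cong[OF refl])
      fix e assume "e \<in> {0..t}"
      then have "t+1+b-e = b+1+(t-e)" by auto
      then show "X (k+e) * uu X k (t+1+b-e) = X (k+e) * uu X k (b+1+(t-e))" by simp
    qed
    also have "\<dots> = fps_nth (sfps X k * sh) t" by (simp add: fps_mult_nth sfps_def sh_def)
    finally show "uu X k (a-(k+1+t)) * ?I (k+1+t) = - (fps_nth (sfps X k * sh) t * uu X k (M-t))"
      using a t by (simp add: mult.commute)
  qed
  also have "\<dots> = - fps_nth (sfps X k * sh * inverse (sfps X k)) M"
    by (simp add: fps_mult_nth sum_negf uu_def)
  also have "sfps X k * sh * inverse (sfps X k) = sh"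
    using s_inv by (metis mult.commute mult.left_commute mult_1_right)
  finally show ?thesis using a by (simp add: sh_def add_ac)
qed

end


lemma Pm_zero: "a < i \<Longrightarrow> Pm X k a i = 0" by (simp add: Pm_def)
lemma Pm_diag: "Pm X k a a = (if a \<le> k then 1 else uu X k 0)" by (simp add: Pm_def)

context
  fixes X :: "nat \<Rightarrow> 'a::field" and k :: nat
  assumes z: "\<And>e. e < k \<Longrightarrow> X e = 0" and nz: "X k \<noteq> 0"
begin

lemma entry:
  assumes "a < A" "b < B"
  shows "(\<Sum>i<A. Pm X k a i * (\<Sum>j<B. X (i+j) * Pm X k b j)) =
    (if a \<le> k \<and> b \<le> k then X (a+b) else if k < a \<and> k < b then - uu X k (a+b-k) else 0)"
proof -
  define R where "R i = (if b \<le> k then X (i+b) else (\<Sum>j=0..b. X (i+j) * uu X k (b-j)))" for i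
  have "(\<Sum>i<A. Pm X k a i * (\<Sum>j<B. X (i+j) * Pm X k b j)) = (\<Sum>i<A. Pm X k a i * R i)"
    using inner[where X=X and k=k, OF z nz assms(2)] by (simp add: R_def)
  also have "\<dots> = (if a \<le> k then R a else (\<Sum>i=0..a. uu X k (a-i) * R i))"
    by (rule outer[where X=X and k=k, OF z nz assms(1)])
  also have "\<dots> = (if a \<le> k \<and> b \<le> k then X (a+b) else if k < a \<and> k < b then - uu X k (a+b-k) else 0)"
  proof (cases "a \<le> k")
    case True
    then show ?thesis using C1[where X=X and k=k, OF z nz True, of b] by (auto simp: R_def)
  next
    case False
    show ?thesis
    proof (cases "b \<le> k")
      case True
      have "(\<Sum>i=0..a. uu X k (a-i) * R i) = (\<Sum>j=0..a. X (b+j) * uu X k (a-j))"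
        using True by (intro sum.cong) (auto simp: R_def add.commute mult.commute)
      also have "\<dots> = 0" using C1[where X=X and k=k, OF z nz True, of a] False by auto
      finally show ?thesis using False True by auto
    next
      case bk: False
      have "(\<Sum>i=0..a. uu X k (a-i) * R i) = - uu X k (a+b-k)"
        using entry_hh[where X=X and k=k, OF z nz, of a b] False bk by (simp add: R_def)
      then show ?thesis using False bk by auto
    qed
  qed
  finally show ?thesis .
qed

end

lemma reduction:
  fixes X :: "nat \<Rightarrow> 'a::{finite,field}"
  assumes z: "\<And>e. e < k \<Longrightarrow> X e = 0" and nz: "X k \<noteq> 0" and kA: "k < A" and kB: "k < B"
  shows "card (Img (\<lambda>i j. X (i+j)) A B) =
    card (UNIV::'a set) ^ (k+1) * card (Img (\<lambda>i j. - uu X k (i+j+k+2)) (A-(k+1)) (B-(k+1)))"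
proof -
  let ?H = "\<lambda>i j. X (i+j)"
  let ?P = "Pm X k"
  let ?Qt = "\<lambda>j b. Pm X k b j"
  have u0: "uu X k 0 \<noteq> 0" by (rule uu0[where X=X and k=k, OF z nz])
  have injQ: "inj_on (app ?Qt B B) (VV B)"
  proof (rule inj_from_kernel)
    fix v assume "v \<in> VV B" "app ?Qt B B v = (\<lambda>_. 0)"
    then show "v = (\<lambda>_. 0)"
    proof (rule tri_kernel[where p=id and c=id, rotated 4])
      show "\<And>i. i < B \<Longrightarrow> Pm X k (id i) i \<noteq> 0" using u0 by (simp add: Pm_diag)
      show "\<And>j. j < B \<Longrightarrow> \<exists>i<B. id i = j" by auto
      show "\<And>i j. i < B \<Longrightarrow> j < B \<Longrightarrow> Pm X k j i \<noteq> 0 \<Longrightarrow> j \<noteq> id i \<Longrightarrow> id (id i) < id j"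
        by (metis Pm_zero id_apply linorder_neqE_nat)
      show "inj_on id {..<B}" by simp
    qed
  qed
  have surjQ: "app ?Qt B B ` VV B = VV B" by (rule surj_square[OF injQ])
  have injP: "inj_on (app ?P A A) (VV A)"
  proof (rule inj_from_kernel)
    fix v assume "v \<in> VV A" "app ?P A A v = (\<lambda>_. 0)"
    then show "v = (\<lambda>_. 0)"
    proof (rule tri_kernel[where p=id and c="\<lambda>j. A - j", rotated 4])
      show "\<And>i. i < A \<Longrightarrow> Pm X k i (id i) \<noteq> 0" using u0 by (simp add: Pm_diag)
      show "\<And>j. j < A \<Longrightarrow> \<exists>i<A. id i = j" by auto
      show "\<And>i j. i < A \<Longrightarrow> j < A \<Longrightarrow> Pm X k i j \<noteq> 0 \<Longrightarrow> j \<noteq> id i \<Longrightarrow> A - id i < A - j"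
      proof -
        fix i j assume "i < A" "j < A" "Pm X k i j \<noteq> 0" "j \<noteq> id i"
        then have "j < i" using Pm_zero[of i j X k] by (cases "i < j") auto
        then show "A - id i < A - j" using \<open>i < A\<close> by simp
      qed
      show "inj_on (\<lambda>j. A - j) {..<A}" by (auto simp: inj_on_def)
    qed
  qed
  have HQ: "Img (mmul ?H ?Qt B) A B = Img ?H A B" by (rule Img_mmul_surj[OF surjQ])
  have "Img (mmul ?P (mmul ?H ?Qt B) A) A B = app ?P A A ` Img (mmul ?H ?Qt B) A B"
    unfolding Img_def app_mmul by (simp add: image_image)
  also have "\<dots> = app ?P A A ` Img ?H A B" unfolding HQ ..
  finally have G1: "card (Img (mmul ?P (mmul ?H ?Qt B) A) A B) = card (Img ?H A B)"
    using card_image[OF inj_on_subset[OF injP Img_sub]] by simp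
  let ?K = "k+1"
  let ?T = "\<lambda>i j. X (i+j)"
  let ?D = "\<lambda>i j. - uu X k (i+j+k+2)"
  let ?Bl = "\<lambda>i j. if i < ?K \<and> j < ?K then ?T i j else if ?K \<le> i \<and> ?K \<le> j then ?D (i-?K) (j-?K) else 0"
  have G2: "Img (mmul ?P (mmul ?H ?Qt B) A) A B = Img ?Bl A B"
  proof (rule Img_cong)
    fix a b assume ab: "a < A" "b < B"
    have "mmul ?P (mmul ?H ?Qt B) A a b = (\<Sum>i<A. Pm X k a i * (\<Sum>j<B. X (i+j) * Pm X k b j))"
      by (simp add: mmul_def)
    also have "\<dots> = (if a \<le> k \<and> b \<le> k then X (a+b) else if k < a \<and> k < b then - uu X k (a+b-k) else 0)"
      by (rule entry[where X=X and k=k, OF z nz ab])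
    also have "\<dots> = ?Bl a b"
    proof -
      have "k < a \<Longrightarrow> k < b \<Longrightarrow> a + b - k = (a - (k+1)) + (b - (k+1)) + k + 2" by arith
      then show ?thesis by auto
    qed
    finally show "mmul ?P (mmul ?H ?Qt B) A a b = ?Bl a b" .
  qed
  have injT: "inj_on (app ?T ?K ?K) (VV ?K)"
  proof (rule inj_from_kernel)
    fix v assume "v \<in> VV ?K" "app ?T ?K ?K v = (\<lambda>_. 0)"
    then show "v = (\<lambda>_. 0)"
    proof (rule tri_kernel[where p="\<lambda>i. k - i" and c=id, rotated 4])
      show "\<And>i. i < ?K \<Longrightarrow> X (i + (k - i)) \<noteq> 0" using nz by simp
      show "\<And>j. j < ?K \<Longrightarrow> \<exists>i<?K. k - i = j" by (rule_tac x="k-j" in exI) auto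
      show "\<And>i j. i < ?K \<Longrightarrow> j < ?K \<Longrightarrow> X (i+j) \<noteq> 0 \<Longrightarrow> j \<noteq> k - i \<Longrightarrow> id (k - i) < id j"
      proof -
        fix i j assume "i < ?K" "j < ?K" "X (i+j) \<noteq> 0" "j \<noteq> k - i"
        then have "k \<le> i + j" using z by (meson not_le)
        then show "id (k - i) < id j" using \<open>j \<noteq> k - i\<close> by simp
      qed
      show "inj_on id {..<?K}" by simp
    qed
  qed
  have "card (Img ?Bl (?K + (A - ?K)) (?K + (B - ?K))) = card (UNIV::'a set) ^ ?K * card (Img ?D (A-?K) (B-?K))"
    by (rule card_Img_block[OF injT])
  moreover have "?K + (A - ?K) = A" "?K + (B - ?K) = B" using kA kB by auto
  ultimately show ?thesis using G1 G2 by simp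
qed


lemma fullrank_Img:
  fixes X :: "nat \<Rightarrow> 'a::{finite,field}"
  assumes z: "\<And>e. e < k \<Longrightarrow> X e = 0" and nz: "X k \<noteq> 0" and A: "0 < A" "A - 1 \<le> k" and kB: "k < B"
  shows "Img (\<lambda>i j. X (i+j)) A B = VV A"
proof
  show "Img (\<lambda>i j. X (i+j)) A B \<subseteq> VV A" by (rule Img_sub)
  define off where "off = k + 1 - A"
  have oA: "off + A = k + 1" "off + A \<le> B" using A kB by (auto simp: off_def)
  let ?S = "\<lambda>i j. X (i + (j + off))"
  have injS: "inj_on (app ?S A A) (VV A)"
  proof (rule inj_from_kernel)
    fix v assume "v \<in> VV A" "app ?S A A v = (\<lambda>_. 0)"
    then show "v = (\<lambda>_. 0)"
    proof (rule tri_kernel[where p="\<lambda>i. A - 1 - i" and c=id, rotated 4])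
      show "\<And>i. i < A \<Longrightarrow> X (i + (A - 1 - i + off)) \<noteq> 0"
      proof -
        fix i assume "i < A" then have "i + (A - 1 - i + off) = k" using oA by auto
        then show "X (i + (A - 1 - i + off)) \<noteq> 0" using nz by simp
      qed
      show "\<And>j. j < A \<Longrightarrow> \<exists>i<A. A - 1 - i = j" by (rule_tac x="A-1-j" in exI) auto
      show "\<And>i j. i < A \<Longrightarrow> j < A \<Longrightarrow> X (i + (j + off)) \<noteq> 0 \<Longrightarrow> j \<noteq> A - 1 - i \<Longrightarrow> id (A - 1 - i) < id j"
      proof -
        fix i j assume "i < A" "j < A" "X (i + (j + off)) \<noteq> 0" "j \<noteq> A - 1 - i"
        then have "k \<le> i + (j + off)" using z by (meson not_le)
        then show "id (A - 1 - i) < id j" using \<open>j \<noteq> A - 1 - i\<close> oA by simp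
      qed
      show "inj_on id {..<A}" by simp
    qed
  qed
  have surjS: "app ?S A A ` VV A = VV A" by (rule surj_square[OF injS])
  show "VV A \<subseteq> Img (\<lambda>i j. X (i+j)) A B"
  proof
    fix w :: "nat \<Rightarrow> 'a" assume "w \<in> VV A"
    then obtain v' where v': "v' \<in> VV A" "w = app ?S A A v'" using surjS by blast
    define v where "v j = (if off \<le> j then v' (j - off) else 0)" for j
    have vV: "v \<in> VV B" using v'(1) oA by (auto simp: VV_def v_def)
    have "app (\<lambda>i j. X (i+j)) A B v = app ?S A A v'"
    proof
      fix i
      have "(\<Sum>j<B. X (i+j) * v j) = (\<Sum>j<off. X (i+j) * v j) + (\<Sum>j<B-off. X (i+(j+off)) * v (j+off))"
        using sum_lessThan_add[where k=off and b="B-off" and f="\<lambda>j. X (i+j) * v j"] oA by simp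
      also have "(\<Sum>j<off. X (i+j) * v j) = 0" by (auto simp: v_def)
      also have "(\<Sum>j<B-off. X (i+(j+off)) * v (j+off)) = (\<Sum>j<A+(B-off-A). X (i+(j+off)) * v' j)"
      proof -
        have e: "A + (B - off - A) = B - off" using oA by arith
        show ?thesis unfolding e by (simp add: v_def)
      qed
      also have "\<dots> = (\<Sum>j<A. X (i+(j+off)) * v' j) + (\<Sum>j<B-off-A. X (i+(j+A+off)) * v' (j+A))"
        by (simp add: sum_lessThan_add add_ac)
      also have "(\<Sum>j<B-off-A. X (i+(j+A+off)) * v' (j+A)) = 0" using v'(1) by (auto simp: VV_def)
      finally show "app (\<lambda>i j. X (i+j)) A B v i = app ?S A A v' i" by (simp add: app_def)
    qed
    then show "w \<in> Img (\<lambda>i j. X (i+j)) A B" unfolding Img_def v'(2) using vV by (metis image_eqI)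
  qed
qed

lemma shift_rows_Img:
  fixes M :: "nat \<Rightarrow> nat \<Rightarrow> 'a::{finite,field}"
  assumes "\<And>i j. i < z0 \<Longrightarrow> j < B \<Longrightarrow> M i j = 0"
  shows "card (Img M (z0 + A') B) = card (Img (\<lambda>i j. M (i+z0) j) A' B)"
proof -
  let ?sh = "\<lambda>w::nat\<Rightarrow>'a. (\<lambda>i. if i < z0 then 0 else w (i - z0))"
  have "app M (z0 + A') B v = ?sh (app (\<lambda>i j. M (i+z0) j) A' B v)" for v
    using assms by (auto simp: app_def fun_eq_iff)
  then have "Img M (z0 + A') B = ?sh ` Img (\<lambda>i j. M (i+z0) j) A' B"
    unfolding Img_def by (simp add: image_image)
  moreover have "inj ?sh"
  proof (rule injI)
    fix w1 w2 assume eq: "?sh w1 = ?sh w2"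
    show "w1 = w2"
    proof
      fix i show "w1 i = w2 i" using fun_cong[OF eq, of "i+z0"] by simp
    qed
  qed
  ultimately show ?thesis by (simp add: card_image inj_on_subset)
qed

lemma highk_card:
  fixes X :: "nat \<Rightarrow> 'a::{finite,field}"
  assumes z: "\<And>e. e < k \<Longrightarrow> X e = 0" and nz: "X k \<noteq> 0" and A: "0 < A" "A \<le> B" "A - 1 \<le> k" "k \<le> A + B - 2"
  shows "card (Img (\<lambda>i j. X (i+j)) A B) = card (UNIV::'a set) ^ min A (A + B - 1 - k)"
proof (cases "k < B")
  case True
  then show ?thesis using fullrank_Img[where X=X and k=k, OF z nz A(1) A(3) True] by (simp add: card_VV)
next
  case False
  define z0 where "z0 = k + 1 - B"
  define A' where "A' = A - z0"
  have zA: "z0 + A' = A" "0 < A'" "A' = A + B - 1 - k" using A False by (auto simp: z0_def A'_def)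
  have "card (Img (\<lambda>i j. X (i+j)) A B) = card (Img (\<lambda>i j. X (i+z0+j)) A' B)"
    using shift_rows_Img[of z0 B "\<lambda>i j. X (i+j)" A'] zA z by (simp add: z0_def)
  also have "Img (\<lambda>i j. X (i+z0+j)) A' B = Img (\<lambda>i j. (\<lambda>e. X (e+z0)) (i+j)) A' B"
    by (simp add: add_ac)
  also have "\<dots> = VV A'"
  proof (rule fullrank_Img)
    show "\<And>e. e < B - 1 \<Longrightarrow> X (e+z0) = 0" using z False by (auto simp: z0_def)
    have "B - 1 + z0 = k" using False A by (simp add: z0_def)
    then show "X (B - 1 + z0) \<noteq> 0" using nz by simp
    show "0 < A'" by (rule zA(2))
    show "A' - 1 \<le> B - 1" using A zA by simp
    show "B - 1 < B" using A by simp
  qed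
  moreover have "A + B - 1 - k < A" using False A by arith
  ultimately show ?thesis using zA A by (simp add: card_VV min_def)
qed

lemma zero_Img:
  assumes "\<And>i j. i < A \<Longrightarrow> j < B \<Longrightarrow> M i j = 0"
  shows "Img M A B = {\<lambda>_. 0}"
proof -
  have "app M A B v = (\<lambda>_. 0)" for v using assms by (auto simp: app_def fun_eq_iff)
  moreover have "(\<lambda>_. 0) \<in> VV B" by (simp add: VV_def)
  ultimately show ?thesis unfolding Img_def by auto
qed


definition fps_of :: "'a::field list \<Rightarrow> 'a fps" where
  "fps_of w = Abs_fps (\<lambda>e. if e < length w then w ! e else 0)"

definition invl :: "'a::field list \<Rightarrow> 'a list" where
  "invl w = map (\<lambda>e. fps_nth (inverse (fps_of w)) e) [0..<length w]"

definition WW :: "nat \<Rightarrow> 'a::field list set" where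
  "WW l = {w. length w = l \<and> w ! 0 \<noteq> 0}"

lemma fps_of_nth: "fps_nth (fps_of w) e = (if e < length w then w ! e else 0)"
  by (simp add: fps_of_def)

lemma constr_local:
  "(\<And>i. i \<le> e \<Longrightarrow> fps_nth f i = fps_nth g i) \<Longrightarrow>
    fps_right_inverse_constructor f a e = fps_right_inverse_constructor g a e"
proof (induction e rule: less_induct)
  case (less e)
  show ?case
  proof (cases e)
    case 0 then show ?thesis by simp
  next
    case (Suc e')
    have "fps_right_inverse_constructor f a e = - a * sum (\<lambda>i. fps_nth f i * fps_right_inverse_constructor f a (e - i)) {1..e}"
      using Suc by simp
    also have "\<dots> = - a * sum (\<lambda>i. fps_nth g i * fps_right_inverse_constructor g a (e - i)) {1..e}"
      using less by (intro arg_cong2[where f="(*)"] refl sum.cong) auto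
    also have "\<dots> = fps_right_inverse_constructor g a e" using Suc by simp
    finally show ?thesis .
  qed
qed

lemma inv_local:
  assumes "\<And>i. i \<le> e \<Longrightarrow> fps_nth f i = fps_nth g i"
  shows "fps_nth (inverse f) e = fps_nth (inverse (g::'a::field fps)) e"
proof -
  have "fps_nth f 0 = fps_nth g 0" using assms by simp
  then show ?thesis unfolding fps_inverse_def using constr_local[OF assms] by simp
qed

lemma length_invl[simp]: "length (invl w) = length w"
  by (simp add: invl_def)

lemma invl_nth: "e < length w \<Longrightarrow> invl w ! e = fps_nth (inverse (fps_of w)) e"
  by (simp add: invl_def)

lemma invl_W: "w \<in> WW l \<Longrightarrow> 0 < l \<Longrightarrow> invl w \<in> WW l"
  by (auto simp: WW_def invl_nth fps_of_nth)

lemma invl_invl: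
  assumes "w \<in> WW l" "0 < l"
  shows "invl (invl w) = w"
proof (rule nth_equalityI)
  show "length (invl (invl w)) = length w" by simp
  fix e assume e: "e < length (invl (invl w))"
  have "invl (invl w) ! e = fps_nth (inverse (fps_of (invl w))) e" using e by (simp add: invl_nth)
  also have "\<dots> = fps_nth (inverse (inverse (fps_of w))) e"
    using e by (intro inv_local) (auto simp: fps_of_nth invl_nth)
  also have "\<dots> = fps_nth (fps_of w) e"
    using assms by (subst fps_inverse_idempotent) (auto simp: WW_def fps_of_nth)
  also have "\<dots> = w ! e" using e by (simp add: fps_of_nth)
  finally show "invl (invl w) ! e = w ! e" .
qed

lemma card_lists: "card {t :: 'a::finite list. length t = l} = card (UNIV::'a set) ^ l"
  using card_lists_length_eq[of "UNIV::'a set" l] by simp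

lemma card_WW:
  assumes "0 < l"
  shows "card (WW l :: 'a::{finite,field} list set) = (card (UNIV::'a set) - 1) * card (UNIV::'a set) ^ (l - 1)"
proof -
  obtain l' where l: "l = Suc l'" using assms by (cases l) auto
  have "WW l = (\<lambda>(c,t). c # t) ` ((UNIV - {0::'a}) \<times> {t. length t = l'})"
  proof
    show "WW l \<subseteq> (\<lambda>(c,t). c # t) ` ((UNIV - {0::'a}) \<times> {t. length t = l'})"
    proof
      fix w :: "'a list" assume "w \<in> WW l"
      then obtain c t where "w = c # t" "c \<noteq> 0" "length t = l'" using l by (cases w) (auto simp: WW_def)
      then show "w \<in> (\<lambda>(c,t). c # t) ` ((UNIV - {0::'a}) \<times> {t. length t = l'})" by force
    qed
  qed (auto simp: WW_def l)
  moreover have "inj_on (\<lambda>(c,t). c # t) ((UNIV - {0::'a}) \<times> {t. length t = l'})"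
    by (auto simp: inj_on_def)
  ultimately have "card (WW l :: 'a list set) = card ((UNIV - {0::'a}) \<times> {t :: 'a list. length t = l'})"
    by (simp add: card_image)
  also have "\<dots> = (card (UNIV::'a set) - 1) * card (UNIV::'a set) ^ l'"
    by (simp add: card_cartesian_product card_lists card_Diff_singleton)
  finally show ?thesis using l by simp
qed


definition Xf :: "'a::zero list \<Rightarrow> nat \<Rightarrow> 'a" where
  "Xf x e = (if e < length x then x ! e else 0)"

definition Ymap :: "nat \<Rightarrow> nat \<Rightarrow> 'a::field list \<Rightarrow> 'a list" where
  "Ymap k N x = map (\<lambda>e. - (invl (drop k x)) ! (e+k+2)) [0..<N-2*k-1]"

definition Fk :: "nat \<Rightarrow> nat \<Rightarrow> 'a::zero list set" where
  "Fk k N = {x. length x = N+1 \<and> (\<forall>e<k. x ! e = 0) \<and> x ! k \<noteq> 0}"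

lemma card_ge2: "2 \<le> card (UNIV::'a::{finite,field} set)"
proof -
  have "{0::'a, 1} \<subseteq> UNIV" by simp
  then have "card {0::'a, 1} \<le> card (UNIV::'a set)" by (intro card_mono) auto
  then show ?thesis by simp
qed

lemma pow_inj: "card (UNIV::'a::{finite,field} set) ^ a = card (UNIV::'a set) ^ b \<Longrightarrow> a = b"
  using card_ge2[where 'a='a] by (simp add: power_inject_exp)

lemma rank_link:
  fixes x :: "'a::{finite,field} list"
  assumes "length x = m+n+1"
  shows "card (UNIV::'a set) ^ mrank (hankel m n x) = card (Img (\<lambda>i j. Xf x (i+j)) (m+1) (n+1))"
proof -
  have "card (Img (\<lambda>i j. x ! (i+j)) (m+1) (n+1)) = card (UNIV::'a set) ^ mrank (hankel m n x)"
    using mrank_card[of "\<lambda>i j. x ! (i+j)" "m+1" "n+1"] by (simp add: hankel_def)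
  moreover have "Img (\<lambda>i j. x ! (i+j)) (m+1) (n+1) = Img (\<lambda>i j. Xf x (i+j)) (m+1) (n+1)"
    using assms by (intro Img_cong) (auto simp: Xf_def)
  ultimately show ?thesis by simp
qed

lemma rank_red:
  fixes x :: "'a::{finite,field} list"
  assumes len: "length x = m+n+1" and km: "k < m" and mn: "m \<le> n" and x: "x \<in> Fk k (m+n)"
  shows "mrank (hankel m n x) = k + 1 + mrank (hankel (m-k-1) (n-k-1) (Ymap k (m+n) x))"
proof -
  let ?q = "card (UNIV::'a set)"
  let ?X = "Xf x"
  have z: "\<And>e. e < k \<Longrightarrow> ?X e = 0" using x km len by (auto simp: Fk_def Xf_def)
  have nz: "?X k \<noteq> 0" using x km len by (auto simp: Fk_def Xf_def)
  have red: "card (Img (\<lambda>i j. ?X (i+j)) (m+1) (n+1)) =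
    ?q ^ (k+1) * card (Img (\<lambda>i j. - uu ?X k (i+j+k+2)) (m+1-(k+1)) (n+1-(k+1)))"
    by (rule reduction[where X="?X" and k=k, OF z nz]) (use km mn in auto)
  have sf: "sfps ?X k = fps_of (drop k x)"
    by (rule fps_ext) (auto simp: sfps_def fps_of_def Xf_def)
  let ?Y = "Ymap k (m+n) x"
  have lenY: "length ?Y = (m-k-1) + (n-k-1) + 1" using km mn by (simp add: Ymap_def)
  have dims: "(m+1-(k+1)) = (m-k-1)+1" "(n+1-(k+1)) = (n-k-1)+1" using km mn by auto
  have "Img (\<lambda>i j. - uu ?X k (i+j+k+2)) ((m-k-1)+1) ((n-k-1)+1) = Img (\<lambda>i j. Xf ?Y (i+j)) ((m-k-1)+1) ((n-k-1)+1)"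
  proof (rule Img_cong)
    fix i j assume ij: "i < (m-k-1)+1" "j < (n-k-1)+1"
    then have lt: "i + j < m+n-2*k-1" using km mn by arith
    have lt2: "i+j+k+2 < length (drop k x)" using lt len by simp
    show "- uu ?X k (i+j+k+2) = Xf ?Y (i+j)"
      using lt lt2 by (simp add: Xf_def Ymap_def uu_def sf invl_nth)
  qed
  then have "card (Img (\<lambda>i j. ?X (i+j)) (m+1) (n+1)) =
    ?q ^ (k+1) * ?q ^ mrank (hankel (m-k-1) (n-k-1) ?Y)"
    using red rank_link[OF lenY] unfolding dims by simp
  then have "?q ^ mrank (hankel m n x) = ?q ^ (k + 1 + mrank (hankel (m-k-1) (n-k-1) ?Y))"
    using rank_link[OF len] by (simp add: power_add)
  then show ?thesis by (rule pow_inj)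
qed

lemma rank_high:
  fixes x :: "'a::{finite,field} list"
  assumes len: "length x = m+n+1" and km: "m \<le> k" "k \<le> m+n" and mn: "m \<le> n" and x: "x \<in> Fk k (m+n)"
  shows "mrank (hankel m n x) = min (m+1) (m+n+1-k)"
proof -
  let ?q = "card (UNIV::'a set)"
  let ?X = "Xf x"
  have z: "\<And>e. e < k \<Longrightarrow> ?X e = 0" using x km len by (auto simp: Fk_def Xf_def)
  have nz: "?X k \<noteq> 0" using x km len by (auto simp: Fk_def Xf_def)
  have "card (Img (\<lambda>i j. ?X (i+j)) (m+1) (n+1)) = ?q ^ min (m+1) (m+1+(n+1)-1-k)"
    by (rule highk_card[where X="?X" and k=k, OF z nz]) (use km mn in auto)
  then have "?q ^ mrank (hankel m n x) = ?q ^ min (m+1) (m+n+1-k)"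
    using rank_link[OF len] by simp
  then show ?thesis by (rule pow_inj)
qed

lemma rank_zero:
  "mrank (hankel m n (replicate (m+n+1) (0::'a::{finite,field}))) = 0"
proof -
  have "card (UNIV::'a set) ^ mrank (hankel m n (replicate (m+n+1) (0::'a))) =
    card (Img (\<lambda>i j. Xf (replicate (m+n+1) (0::'a)) (i+j)) (m+1) (n+1))"
    by (rule rank_link) simp
  also have "Img (\<lambda>i j. Xf (replicate (m+n+1) (0::'a)) (i+j)) (m+1) (n+1) = {\<lambda>_. 0}"
    by (rule zero_Img) (auto simp: Xf_def nth_replicate simp del: replicate.simps)
  finally have "card (UNIV::'a set) ^ mrank (hankel m n (replicate (m+n+1) (0::'a))) = card (UNIV::'a set) ^ 0"
    by simp
  then show ?thesis by (rule pow_inj)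
qed

lemma card_Fk:
  assumes "k \<le> N"
  shows "card (Fk k N :: 'a::{finite,field} list set) = card (WW (N+1-k) :: 'a list set)"
proof -
  have "bij_betw (drop k) (Fk k N :: 'a list set) (WW (N+1-k))"
  proof (rule bij_betw_byWitness[where f'="\<lambda>w. replicate k 0 @ w"])
    show "\<forall>x\<in>Fk k N. replicate k 0 @ drop k x = (x :: 'a list)"
    proof
      fix x :: "'a list" assume x: "x \<in> Fk k N"
      show "replicate k 0 @ drop k x = x"
        by (rule nth_equalityI) (use x assms in \<open>auto simp: Fk_def nth_append\<close>)
    qed
    show "\<forall>w\<in>WW (N+1-k). drop k (replicate k 0 @ w) = (w :: 'a list)" by simp
    show "drop k ` Fk k N \<subseteq> WW (N+1-k)" using assms by (auto simp: Fk_def WW_def)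
    show "(\<lambda>w. replicate k 0 @ w) ` WW (N+1-k) \<subseteq> Fk k N" using assms by (auto simp: Fk_def WW_def nth_append)
  qed
  then show ?thesis by (rule bij_betw_same_card)
qed


lemma count_low:
  fixes m n k r' :: nat
  assumes km: "k < m" and mn: "m \<le> n"
  shows "card {x \<in> (Fk k (m+n) :: 'a::{finite,field} list set). mrank (hankel m n x) = k+1+r'} =
    card (WW (k+2) :: 'a list set) * card {y :: 'a list. length y = m+n-2*k-1 \<and> mrank (hankel (m-k-1) (n-k-1) y) = r'}"
proof -
  define N where "N = m + n"
  define n' where "n' = N - 2*k - 1"
  define l where "l = N + 1 - k"
  have l: "l = (k+2) + n'" "0 < l" using km mn by (auto simp: l_def n'_def N_def)
  let ?S = "{x \<in> (Fk k (m+n) :: 'a list set). mrank (hankel m n x) = k+1+r'}"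
  let ?Y = "{y :: 'a list. length y = m+n-2*k-1 \<and> mrank (hankel (m-k-1) (n-k-1) y) = r'}"
  let ?\<Phi> = "\<lambda>x::'a list. (take (k+2) (invl (drop k x)), Ymap k (m+n) x)"
  let ?\<Psi> = "\<lambda>(p::'a list, y::'a list). replicate k 0 @ invl (p @ map uminus y)"
  have dropW: "drop k x \<in> WW l" if "x \<in> Fk k (m+n)" for x :: "'a list"
    using that km by (auto simp: Fk_def WW_def l_def N_def)
  have rep: "replicate k 0 @ drop k x = x" if "x \<in> Fk k (m+n)" for x :: "'a list"
    by (rule nth_equalityI) (use that km in \<open>auto simp: Fk_def nth_append\<close>)
  have F1: "take (k+2) (invl (drop k x)) @ map uminus (Ymap k (m+n) x) = invl (drop k x)"
    if "x \<in> Fk k (m+n)" for x :: "'a list"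
  proof -
    have lv: "length (invl (drop k x)) = l" using dropW[OF that] by (simp add: WW_def)
    show ?thesis
    proof (rule nth_equalityI)
      show "length (take (k+2) (invl (drop k x)) @ map uminus (Ymap k (m+n) x)) = length (invl (drop k x))"
        using lv l by (simp add: Ymap_def n'_def N_def)
      fix e assume "e < length (take (k+2) (invl (drop k x)) @ map uminus (Ymap k (m+n) x))"
      then have e: "e < l" using lv l by (simp add: Ymap_def n'_def N_def)
      show "(take (k+2) (invl (drop k x)) @ map uminus (Ymap k (m+n) x)) ! e = invl (drop k x) ! e"
      proof (cases "e < k+2")
        case True then show ?thesis using lv l by (simp add: nth_append)
      next
        case False
        then have "e - (k+2) < n'" using e l by simp
        moreover have "e - (k+2) + k + 2 = e" using False by simp
        ultimately show ?thesis using False lv l by (simp add: nth_append Ymap_def n'_def N_def)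
      qed
    qed
  qed
  have bij: "bij_betw ?\<Phi> ?S (WW (k+2) \<times> ?Y)"
  proof (rule bij_betw_byWitness[where f'="?\<Psi>"])
    show "\<forall>x\<in>?S. ?\<Psi> (?\<Phi> x) = x"
    proof
      fix x assume x: "x \<in> ?S"
      then have xF: "x \<in> Fk k (m+n)" by simp
      have "?\<Psi> (?\<Phi> x) = replicate k 0 @ invl (invl (drop k x))" using F1[OF xF] by simp
      also have "\<dots> = replicate k 0 @ drop k x" using invl_invl[OF dropW[OF xF] l(2)] by simp
      also have "\<dots> = x" by (rule rep[OF xF])
      finally show "?\<Psi> (?\<Phi> x) = x" .
    qed
    have PsiPhi: "?\<Phi> (?\<Psi> (p, y)) = (p, y) \<and> ?\<Psi> (p, y) \<in> Fk k (m+n)"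
      if py: "p \<in> WW (k+2)" "length y = m+n-2*k-1" for p y :: "'a list"
    proof -
      let ?v = "p @ map uminus y"
      have vW: "?v \<in> WW l" using py l by (auto simp: WW_def nth_append n'_def N_def)
      have d: "drop k (?\<Psi> (p, y)) = invl ?v" by simp
      have ii: "invl (drop k (?\<Psi> (p, y))) = ?v" unfolding d by (rule invl_invl[OF vW l(2)])
      have tk: "take (k+2) ?v = p" using py by (simp add: WW_def)
      have ym: "Ymap k (m+n) (?\<Psi> (p, y)) = y"
      proof -
        have "Ymap k (m+n) (?\<Psi> (p, y)) = map (\<lambda>e. - ?v ! (e+k+2)) [0..<m+n-2*k-1]"
          unfolding Ymap_def ii ..
        also have "\<dots> = y"
          by (rule nth_equalityI) (use py in \<open>auto simp: nth_append WW_def\<close>)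
        finally show ?thesis .
      qed
      have inF: "?\<Psi> (p, y) \<in> Fk k (m+n)"
      proof -
        have "invl ?v \<in> WW l" by (rule invl_W[OF vW l(2)])
        then show ?thesis using l by (auto simp: Fk_def WW_def nth_append l_def N_def)
      qed
      show ?thesis using ii tk ym inF by simp
    qed
    show "\<forall>z\<in>WW (k+2) \<times> ?Y. ?\<Phi> (?\<Psi> z) = z" using PsiPhi by auto
    show "?\<Phi> ` ?S \<subseteq> WW (k+2) \<times> ?Y"
    proof
      fix z assume "z \<in> ?\<Phi> ` ?S"
      then obtain x where x: "x \<in> ?S" "z = ?\<Phi> x" by auto
      then have xF: "x \<in> Fk k (m+n)" by simp
      have lenx: "length x = m+n+1" using xF by (simp add: Fk_def)
      have "invl (drop k x) \<in> WW l" by (rule invl_W[OF dropW[OF xF] l(2)])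
      then have t: "take (k+2) (invl (drop k x)) \<in> WW (k+2)" using l by (auto simp: WW_def)
      have "mrank (hankel m n x) = k + 1 + mrank (hankel (m-k-1) (n-k-1) (Ymap k (m+n) x))"
        by (rule rank_red[OF lenx km mn xF])
      then have "Ymap k (m+n) x \<in> ?Y" using x by (simp add: Ymap_def)
      then show "z \<in> WW (k+2) \<times> ?Y" using x t by simp
    qed
    show "?\<Psi> ` (WW (k+2) \<times> ?Y) \<subseteq> ?S"
    proof
      fix x assume "x \<in> ?\<Psi> ` (WW (k+2) \<times> ?Y)"
      then obtain p y where py: "p \<in> WW (k+2)" "y \<in> ?Y" "x = ?\<Psi> (p, y)" by auto
      have pp: "?\<Phi> x = (p, y)" "x \<in> Fk k (m+n)" using PsiPhi[OF py(1)] py by auto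
      have lenx: "length x = m+n+1" using pp(2) by (simp add: Fk_def)
      have "mrank (hankel m n x) = k + 1 + mrank (hankel (m-k-1) (n-k-1) (Ymap k (m+n) x))"
        by (rule rank_red[OF lenx km mn pp(2)])
      also have "Ymap k (m+n) x = y" using pp(1) by simp
      finally show "x \<in> ?S" using py(2) pp(2) by simp
    qed
  qed
  show ?thesis using bij_betw_same_card[OF bij] by (simp add: card_cartesian_product)
qed


definition F :: "nat \<Rightarrow> nat \<Rightarrow> nat \<Rightarrow> nat \<Rightarrow> nat" where
  "F q m n r = (if r = 0 then 1 else if r \<le> m then q^(2*r-2)*(q^2-1)
     else if r = m+1 then q^(2*r-2)*(q^(n-m+1)-1) else 0)"

lemma geo: "1 \<le> (q::nat) \<Longrightarrow> (q-1) * (\<Sum>i<t. q^(a+i)) + q^a = q^(a+t)"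
proof (induction t)
  case 0 then show ?case by simp
next
  case (Suc t)
  have "(q-1) * (\<Sum>i<Suc t. q^(a+i)) + q^a = ((q-1) * (\<Sum>i<t. q^(a+i)) + q^a) + (q-1) * q^(a+t)"
    by (simp add: algebra_simps)
  also have "\<dots> = q^(a+t) + (q-1) * q^(a+t)" using Suc by simp
  also have "\<dots> = q * q^(a+t)" using Suc.prems by (simp add: algebra_simps)
  finally show ?case by simp
qed

lemma rev_sum: "(\<Sum>k<t. q^(2*t-k-1)) = (\<Sum>i<t. (q::nat)^(t+i))"
proof -
  have "(\<Sum>k<t. q^(2*t-k-1)) = (\<Sum>k<t. (\<lambda>i. q^(t+i)) (t - Suc k))"
    by (intro sum.cong) (auto simp: mult_2)
  also have "\<dots> = (\<Sum>i<t. q^(t+i))" by (rule sum.nat_diff_reindex)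
  finally show ?thesis .
qed

lemma rec_arith:
  fixes q m n r :: nat
  assumes q: "2 \<le> q" and mn: "m \<le> n"
  shows "(if r = 0 then 1 else 0)
    + (\<Sum>k<m. if k+1 \<le> r then (q-1)*q^(k+1) * F q (m-k-1) (n-k-1) (r-k-1) else 0)
    + (\<Sum>k\<in>{m..m+n}. if r = min (m+1) (m+n+1-k) then (q-1)*q^(m+n-k) else 0)
    = F q m n r"
proof -
  consider "r = 0" | "0 < r" "r \<le> m" | "r = m+1" | "m+1 < r" by linarith
  then show ?thesis
  proof cases
    case 1
    have "(\<Sum>k\<in>{m..m+n}. if r = min (m+1) (m+n+1-k) then (q-1)*q^(m+n-k) else 0) = 0"
      using 1 by (intro sum.neutral) auto
    then show ?thesis using 1 by (simp add: F_def)
  next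
    case 4
    have "(\<Sum>k<m. if k+1 \<le> r then (q-1)*q^(k+1) * F q (m-k-1) (n-k-1) (r-k-1) else 0) = 0"
      using 4 by (intro sum.neutral) (auto simp: F_def)
    moreover have "(\<Sum>k\<in>{m..m+n}. if r = min (m+1) (m+n+1-k) then (q-1)*q^(m+n-k) else 0) = 0"
      using 4 by (intro sum.neutral) auto
    ultimately show ?thesis using 4 by (simp add: F_def)
  next
    case 2
    define t where "t = r - 1"
    have rt: "r = t + 1" using 2 by (simp add: t_def)
    have T2: "(\<Sum>k\<in>{m..m+n}. if r = min (m+1) (m+n+1-k) then (q-1)*q^(m+n-k) else 0) = (q-1)*q^t"
    proof -
      have "(\<Sum>k\<in>{m..m+n}. if r = min (m+1) (m+n+1-k) then (q-1)*q^(m+n-k) else 0)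
        = (\<Sum>k\<in>{m..m+n}. if k = m+n+1-r then (q-1)*q^(m+n-k) else 0)"
        using 2 by (intro sum.cong) auto
      also have "\<dots> = (q-1)*q^(m+n-(m+n+1-r))"
      proof -
        have "m+n+1-r \<in> {m..m+n}" using 2 mn by auto
        then show ?thesis by (simp only: sum.delta finite_atLeastAtMost if_True)
      qed
      finally show ?thesis using 2 by (simp add: t_def)
    qed
    have T1: "(\<Sum>k<m. if k+1 \<le> r then (q-1)*q^(k+1) * F q (m-k-1) (n-k-1) (r-k-1) else 0)
      = (q-1)*q^r + (q-1)*(q^2-1)*(\<Sum>k<t. q^(2*t-k-1))"
    proof -
      have "(\<Sum>k<m. if k+1 \<le> r then (q-1)*q^(k+1) * F q (m-k-1) (n-k-1) (r-k-1) else 0)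
        = (\<Sum>k<r. (q-1)*q^(k+1) * F q (m-k-1) (n-k-1) (r-k-1))"
        using 2 by (intro sum.mono_neutral_cong_right) auto
      also have "\<dots> = (\<Sum>k<t. (q-1)*q^(k+1) * F q (m-k-1) (n-k-1) (r-k-1)) + (q-1)*q^r"
      proof -
        have "F q (m-t-1) (n-t-1) 0 = 1" by (simp add: F_def)
        then show ?thesis by (simp add: rt)
      qed
      also have "(\<Sum>k<t. (q-1)*q^(k+1) * F q (m-k-1) (n-k-1) (r-k-1)) = (\<Sum>k<t. (q-1)*(q^2-1)*q^(2*t-k-1))"
      proof (rule sum.cong[OF refl])
        fix k assume k: "k \<in> {..<t}"
        then have "F q (m-k-1) (n-k-1) (r-k-1) = q^(2*(r-k-1)-2)*(q^2-1)"
          using 2 by (auto simp: F_def rt)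
        moreover have "k+1 + (2*(r-k-1)-2) = 2*t-k-1" using k rt by auto
        moreover have "(q-1)*q^(k+1) * (q^(2*(r-k-1)-2)*(q^2-1)) = (q-1)*(q^2-1)*(q^(k+1)*q^(2*(r-k-1)-2))"
          by (simp only: mult_ac)
        ultimately show "(q-1)*q^(k+1) * F q (m-k-1) (n-k-1) (r-k-1) = (q-1)*(q^2-1)*q^(2*t-k-1)"
          by (simp only: power_add[symmetric])
      qed
      also have "\<dots> = (q-1)*(q^2-1)*(\<Sum>k<t. q^(2*t-k-1))" by (simp add: sum_distrib_left)
      finally show ?thesis by simp
    qed
    have G: "(q-1) * (\<Sum>k<t. q^(2*t-k-1)) + q^t = q^(2*t)"
      using geo[of q t t] q unfolding rev_sum by (simp add: mult_2)
    define g where "g = (\<Sum>k<t. q^(2*t-k-1))"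
    have Gi: "(int q - 1) * int g + int q^t = int q^(2*t)"
      using arg_cong[OF G[folded g_def], of int] q by (simp add: of_nat_diff)
    have goal: "int ((q-1)*q^r + (q-1)*(q^2-1)*g + (q-1)*q^t) = int (q^(2*r-2)*(q^2-1))"
    proof -
      have q1: "1 \<le> q" "1 \<le> q^2" using q by auto
      have i1: "int (q-1) = int q - 1" using q1 by (simp add: of_nat_diff)
      have i2: "int (q^2-1) = int q^2 - 1" using q1 by (simp add: of_nat_diff)
      have "int ((q-1)*q^r + (q-1)*(q^2-1)*g + (q-1)*q^t)
        = (int q - 1)*int q^r + (int q - 1)*(int q^2 - 1)*int g + (int q - 1)*int q^t"
        by (simp only: of_nat_add of_nat_mult of_nat_power i1 i2)
      also have "\<dots> = (int q - 1)*int q^(t+1) + (int q^2 - 1) * ((int q - 1) * int g) + (int q - 1)*int q^t"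
        by (simp add: rt mult_ac)
      also have "\<dots> = (int q - 1)*int q^(t+1) + (int q^2 - 1) * (int q^(2*t) - int q^t) + (int q - 1)*int q^t"
        using Gi by (simp add: eq_diff_eq)
      also have "\<dots> = int q^(2*t) * (int q^2 - 1)" by (simp add: algebra_simps power_add power2_eq_square)
      also have "\<dots> = int (q^(2*r-2)*(q^2-1))" using q1 by (simp add: of_nat_diff rt)
      finally show ?thesis .
    qed
    have goal': "(q-1)*q^r + (q-1)*(q^2-1)*g + (q-1)*q^t = q^(2*r-2)*(q^2-1)"
      using goal by (simp only: of_nat_eq_iff)
    have Fv: "F q m n r = q^(2*r-2)*(q^2-1)" using 2 by (simp add: F_def)
    show ?thesis unfolding T1 T2 Fv g_def[symmetric] using goal' 2 by simp
  next
    case 3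
    define P where "P = q^(n-m+1)"
    have T1: "(\<Sum>k<m. if k+1 \<le> r then (q-1)*q^(k+1) * F q (m-k-1) (n-k-1) (r-k-1) else 0)
      = (q-1)*(P-1)*(\<Sum>k<m. q^(2*m-k-1))"
    proof -
      have "(\<Sum>k<m. if k+1 \<le> r then (q-1)*q^(k+1) * F q (m-k-1) (n-k-1) (r-k-1) else 0)
        = (\<Sum>k<m. (q-1)*(P-1)*q^(2*m-k-1))"
      proof (rule sum.cong[OF refl])
        fix k assume k: "k \<in> {..<m}"
        then have "F q (m-k-1) (n-k-1) (r-k-1) = q^(2*(m-k)-2)*(P-1)"
          using 3 mn by (auto simp: F_def P_def)
        moreover have "k+1 + (2*(m-k)-2) = 2*m-k-1" using k by auto
        moreover have "(q-1)*q^(k+1) * (q^(2*(m-k)-2)*(P-1)) = (q-1)*(P-1)*(q^(k+1)*q^(2*(m-k)-2))"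
          by (simp only: mult_ac)
        moreover have "k+1 \<le> r" using 3 k by simp
        ultimately show "(if k+1 \<le> r then (q-1)*q^(k+1) * F q (m-k-1) (n-k-1) (r-k-1) else 0) = (q-1)*(P-1)*q^(2*m-k-1)"
          by (simp only: power_add[symmetric] if_True)
      qed
      also have "\<dots> = (q-1)*(P-1)*(\<Sum>k<m. q^(2*m-k-1))" by (simp add: sum_distrib_left)
      finally show ?thesis .
    qed
    have T2: "(\<Sum>k\<in>{m..m+n}. if r = min (m+1) (m+n+1-k) then (q-1)*q^(m+n-k) else 0)
      = (q-1)*(\<Sum>i<n-m+1. q^(m+i))"
    proof -
      have "(\<Sum>k\<in>{m..m+n}. if r = min (m+1) (m+n+1-k) then (q-1)*q^(m+n-k) else 0)
        = (\<Sum>k\<in>{m..n}. (q-1)*q^(m+n-k))"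
        using 3 mn by (intro sum.mono_neutral_cong_right) auto
      also have "\<dots> = (\<Sum>i<n-m+1. (q-1)*q^(m+i))"
        by (rule sum.reindex_bij_witness[where i="\<lambda>i. n - i" and j="\<lambda>k. n - k"]) (use mn in auto)
      finally show ?thesis by (simp only: sum_distrib_left)
    qed
    define g where "g = (\<Sum>k<m. q^(2*m-k-1))"
    define h where "h = (\<Sum>i<n-m+1. q^(m+i))"
    have G: "(q-1) * g + q^m = q^(2*m)"
      using geo[of q m m] q unfolding g_def rev_sum by (simp add: mult_2)
    have H: "(q-1) * h + q^m = q^m * P"
    proof -
      have "(q-1) * h + q^m = q^(m+(n-m+1))"
        unfolding h_def by (rule geo[where q=q and t="n-m+1" and a=m]) (use q in simp)
      also have "\<dots> = q^m * P" by (simp only: P_def power_add)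
      finally show ?thesis .
    qed
    have Gi: "(int q - 1) * int g = int q^(2*m) - int q^m"
      using arg_cong[OF G, of int] q by (simp add: of_nat_diff eq_diff_eq)
    have Hi: "(int q - 1) * int h = int q^m * int P - int q^m"
      using arg_cong[OF H, of int] q by (simp add: of_nat_diff eq_diff_eq)
    have P1: "1 \<le> P" using q by (simp add: P_def)
    have goal: "int ((q-1)*(P-1)*g + (q-1)*h) = int (q^(2*m)*(P-1))"
    proof -
      have i1: "int (q-1) = int q - 1" using q by (simp add: of_nat_diff)
      have i2: "int (P-1) = int P - 1" using P1 by (simp add: of_nat_diff)
      have "int ((q-1)*(P-1)*g + (q-1)*h) = (int q - 1)*(int P - 1)*int g + (int q - 1)*int h"
        by (simp only: of_nat_add of_nat_mult i1 i2)
      also have "\<dots> = (int P - 1) * ((int q - 1) * int g) + (int q - 1) * int h"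
        by (simp add: mult_ac)
      also have "\<dots> = (int P - 1) * (int q^(2*m) - int q^m) + (int q^m * int P - int q^m)"
        unfolding Gi Hi ..
      also have "\<dots> = int q^(2*m) * (int P - 1)" by (simp add: algebra_simps)
      also have "\<dots> = int (q^(2*m)*(P-1))" using P1 by (simp add: of_nat_diff)
      finally show ?thesis .
    qed
    have "F q m n r = q^(2*m)*(P-1)" using 3 by (simp add: F_def P_def)
    moreover have goal': "(q-1)*(P-1)*g + (q-1)*h = q^(2*m)*(P-1)"
      using goal by (simp only: of_nat_eq_iff)
    ultimately show ?thesis unfolding T1 T2 g_def[symmetric] h_def[symmetric] using 3 by simp
  qed
qed


lemma finite_len: "finite {x :: 'a::finite list. length x = l}"
  using finite_lists_length_eq[of "UNIV::'a set" l] by simp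

lemma partition_count:
  fixes P :: "'a::{finite,field} list \<Rightarrow> bool"
  shows "card {x. length x = N+1 \<and> P x} =
    (if P (replicate (N+1) 0) then 1 else 0) + (\<Sum>k<N+1. card {x \<in> Fk k N. P x})"
proof -
  let ?Z = "{x \<in> {replicate (N+1) (0::'a)}. P x}"
  let ?U = "\<Union>k\<in>{..<N+1}. {x \<in> (Fk k N :: 'a list set). P x}"
  have eq: "{x. length x = N+1 \<and> P x} = ?Z \<union> ?U"
  proof
    show "{x. length x = N+1 \<and> P x} \<subseteq> ?Z \<union> ?U"
    proof
      fix x :: "'a list" assume x: "x \<in> {x. length x = N+1 \<and> P x}"
      show "x \<in> ?Z \<union> ?U"
      proof (cases "\<exists>e<N+1. x ! e \<noteq> 0")
        case False
        then have "x = replicate (N+1) 0" using x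
          by (intro nth_equalityI) (auto simp: nth_replicate simp del: replicate.simps)
        then show ?thesis using x by auto
      next
        case True
        define k where "k = (LEAST e. x ! e \<noteq> 0)"
        obtain e where e: "e < N+1" "x ! e \<noteq> 0" using True by auto
        have kx: "x ! k \<noteq> 0" unfolding k_def using e(2) by (rule LeastI)
        have ke: "k \<le> e" unfolding k_def using e by (intro Least_le) 
        have z: "\<forall>e'<k. x ! e' = 0" unfolding k_def using not_less_Least by blast
        have "x \<in> Fk k N" using x kx z by (simp add: Fk_def)
        then show ?thesis using x ke e by auto
      qed
    qed
    show "?Z \<union> ?U \<subseteq> {x. length x = N+1 \<and> P x}" by (auto simp: Fk_def)
  qed
  have fin: "finite {x \<in> (Fk k N :: 'a list set). P x}" for k
    by (rule finite_subset[OF _ finite_len[of "N+1"]]) (auto simp: Fk_def)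
  have disj: "{x \<in> (Fk i N :: 'a list set). P x} \<inter> {x \<in> Fk j N. P x} = {}" if "i \<noteq> j" for i j
  proof -
    { fix x :: "'a list" assume "x \<in> Fk i N" "x \<in> Fk j N"
      then have False using that by (cases "i < j") (auto simp: Fk_def) }
    then show ?thesis by auto
  qed
  have cU: "card ?U = (\<Sum>k<N+1. card {x \<in> Fk k N. P x})"
    by (rule card_UN_disjoint) (use fin disj in auto)
  have "?Z \<inter> ?U = {}" by (auto simp: Fk_def nth_replicate simp del: replicate.simps)
  moreover have "finite ?U" using fin by auto
  ultimately have "card (?Z \<union> ?U) = card ?Z + card ?U" by (intro card_Un_disjoint) auto
  moreover have "card ?Z = (if P (replicate (N+1) 0) then 1 else 0)"
  proof (cases "P (replicate (N+1) 0)")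
    case True
    then have "?Z = {replicate (N+1) 0}" by blast
    then show ?thesis using True by simp
  next
    case False
    then have "?Z = {}" by blast
    then show ?thesis using False by simp
  qed
  ultimately show ?thesis using eq cU by simp
qed

lemma main_count:
  fixes m :: nat
  assumes "q = card (UNIV :: 'a::{finite,field} set)"
  shows "\<And>n r. m \<le> n \<Longrightarrow> card {x :: 'a list. length x = m + n + 1 \<and> mrank (hankel m n x) = r} = F q m n r"
  using assms
proof (induction m rule: less_induct)
  case (less m n r)
  have q2: "2 \<le> q" using less.prems card_ge2[where 'a='a] by simp
  have mn: "m \<le> n" by (rule less.prems(1))
  let ?P = "\<lambda>x::'a list. mrank (hankel m n x) = r"
  have "card {x :: 'a list. length x = m+n+1 \<and> ?P x} =
    (if ?P (replicate (m+n+1) 0) then 1 else 0) + (\<Sum>k<m+n+1. card {x \<in> Fk k (m+n). ?P x})"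
    by (rule partition_count)
  also have "(if ?P (replicate (m+n+1) 0) then 1 else 0) = (if r = 0 then 1 else (0::nat))"
    using rank_zero[where 'a='a and m=m and n=n] by auto
  also have "(\<Sum>k<m+n+1. card {x \<in> Fk k (m+n). ?P x}) =
      (\<Sum>k<m. card {x \<in> Fk k (m+n). ?P x}) + (\<Sum>k\<in>{m..m+n}. card {x \<in> Fk k (m+n). ?P x})"
  proof -
    have e: "{..<m+n+1} = {..<m} \<union> {m..m+n}" by auto
    show ?thesis unfolding e by (rule sum.union_disjoint) auto
  qed
  also have "(\<Sum>k<m. card {x \<in> Fk k (m+n). ?P x}) =
    (\<Sum>k<m. if k+1 \<le> r then (q-1)*q^(k+1) * F q (m-k-1) (n-k-1) (r-k-1) else 0)"
  proof (rule sum.cong[OF refl])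
    fix k assume k: "k \<in> {..<m}"
    then have km: "k < m" by simp
    show "card {x \<in> Fk k (m+n). ?P x} = (if k+1 \<le> r then (q-1)*q^(k+1) * F q (m-k-1) (n-k-1) (r-k-1) else 0)"
    proof (cases "k+1 \<le> r")
      case True
      then have r: "r = k+1+(r-k-1)" by simp
      have "card {x \<in> Fk k (m+n). ?P x} = card {x \<in> (Fk k (m+n) :: 'a list set). mrank (hankel m n x) = k+1+(r-k-1)}"
        using r by simp
      also have "\<dots> = card (WW (k+2) :: 'a list set) * card {y :: 'a list. length y = m+n-2*k-1 \<and> mrank (hankel (m-k-1) (n-k-1) y) = r-k-1}"
        by (rule count_low[OF km mn])
      also have "card (WW (k+2) :: 'a list set) = (q-1)*q^(k+1)" using card_WW[of "k+2", where 'a='a] less.prems by simp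
      also have "{y :: 'a list. length y = m+n-2*k-1 \<and> mrank (hankel (m-k-1) (n-k-1) y) = r-k-1}
          = {y :: 'a list. length y = (m-k-1)+(n-k-1)+1 \<and> mrank (hankel (m-k-1) (n-k-1) y) = r-k-1}"
        using km mn by (intro Collect_cong) auto
      also have "card \<dots> = F q (m-k-1) (n-k-1) (r-k-1)"
        by (rule less.IH) (use km mn less.prems in auto)
      finally show ?thesis using True by simp
    next
      case False
      have emp: "{x \<in> (Fk k (m+n) :: 'a list set). ?P x} = {}"
      proof -
        { fix x :: "'a list" assume x: "x \<in> Fk k (m+n)" "?P x"
          have "length x = m+n+1" using x by (simp add: Fk_def)
          then have "mrank (hankel m n x) = k + 1 + mrank (hankel (m-k-1) (n-k-1) (Ymap k (m+n) x))"
            by (rule rank_red[OF _ km mn x(1)])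
          then have False using x(2) False by simp }
        then show ?thesis by auto
      qed
      show ?thesis unfolding emp using False by simp
    qed
  qed
  also have "(\<Sum>k\<in>{m..m+n}. card {x \<in> Fk k (m+n). ?P x}) =
    (\<Sum>k\<in>{m..m+n}. if r = min (m+1) (m+n+1-k) then (q-1)*q^(m+n-k) else 0)"
  proof (rule sum.cong[OF refl])
    fix k assume k: "k \<in> {m..m+n}"
    have "{x \<in> (Fk k (m+n) :: 'a list set). ?P x} = (if r = min (m+1) (m+n+1-k) then Fk k (m+n) else {})"
    proof -
      have "mrank (hankel m n x) = min (m+1) (m+n+1-k)" if "x \<in> Fk k (m+n)" for x :: "'a list"
        using that k mn by (intro rank_high) (auto simp: Fk_def)
      then show ?thesis by auto
    qed
    moreover have "card (Fk k (m+n) :: 'a list set) = (q-1)*q^(m+n-k)"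
    proof -
      have "card (Fk k (m+n) :: 'a list set) = card (WW (m+n+1-k) :: 'a list set)"
        using k by (intro card_Fk) auto
      also have "\<dots> = (q-1)*q^(m+n-k)" using card_WW[of "m+n+1-k", where 'a='a] k less.prems by simp
      finally show ?thesis .
    qed
    ultimately show "card {x \<in> Fk k (m+n). ?P x} = (if r = min (m+1) (m+n+1-k) then (q-1)*q^(m+n-k) else 0)"
      by simp
  qed
  also have "(if r = 0 then 1 else 0) + ((\<Sum>k<m. if k+1 \<le> r then (q-1)*q^(k+1) * F q (m-k-1) (n-k-1) (r-k-1) else 0)
    + (\<Sum>k\<in>{m..m+n}. if r = min (m+1) (m+n+1-k) then (q-1)*q^(m+n-k) else 0)) = F q m n r"
    using rec_arith[OF q2 mn, of r] by (simp add: add.assoc)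
  finally show ?case .
qed

theorem corollary2:
  fixes r m n :: nat and q :: nat
  assumes "q = card (UNIV :: 'a set)"
    and "m \<le> n"
  shows "card {x :: ('a::{finite, field}) list. length x = m + n + 1 \<and> mrank (hankel m n x) = r} =
    (if r = 0 then 1
     else if r \<le> m then q ^ (2 * r - 2) * (q ^ 2 - 1)
     else if r = m + 1 then q ^ (2 * r - 2) * (q ^ (n - m + 1) - 1)
     else 0)"
  using main_count[OF assms(1) assms(2)] by (simp add: F_def)

end
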